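(* Suppose $U=\{(u,v,x): (u,x)\in V,\ v\in\mathbb{R}\}$ with $V$ a connected open set. Let $X = X_1 n + X_2\ell+\sum_i X_i m_i$ be a Killing vector field of $g$ on $U$ that is nowhere spacelike, i.e. $g(X,X)\le 0$ at every point of $U$ (for all values of $v$). Then: - $X_1$ is a constant $c$; - $X = c\,n + F_2\,\ell + \sum_i F_i\, m_i$, where $F_2,F_i$ are functions of $(u,x^3,\dots,x^N)$ only; - $2cF_2 + \sum_i F_i^2 \le 0$ on $V$.
   Context: Work on an open set $U$ with coordinates $(u,v,x^3,\dots,x^N)$, $N\ge 3$. The Lorentzian metric is $$g = 2\,du\,\big(dv + H\,du + \hat W_e\,dx^e\big) + g_{ef}\,dx^e dx^f,$$ where the indices $e,f$ run over $3,\dots,N$ and are summed. The functions $H,\hat W_e,g_{ef}$ depend only on $(u,x^3,\dots,x^N)$, not on $v$, and $(g_{ef})$ is positive definite. Then $\ell=\partial_v$ is a covariantly constant null vector. Choose functions $m^i_{\ e}(u,x)$, $i,e\in\{3,\dots,N\}$, with $g_{ef}=\sum_i m^i_{\ e}m^i_{\ f}$, and let $m_i^{\ e}$ be the inverse matrix, so that $\sum_e m^i_{\ e}m_j^{\ e}=\delta_{ij}$. The coframe is $m^1 = dv + H\,du+\hat W_e\,dx^e$, $m^2=du$, $m^i = m^i_{\ e}dx^e$, so that $g = 2m^1m^2+\sum_i (m^i)^2$. The dual frame vectors are $$\ell=\partial_v,\qquad n=\partial_u - H\,\partial_v,\qquad m_i = m_i^{\ e}\big(\partial_e-\hat W_e\,\partial_v\big).$$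 For a vector field $X$ we write $X = X_1 n + X_2\ell+\sum_i X_i m_i$. Equivalently $X_1=g(X,\ell)$, $X_2=g(X,n)$, $X_i=g(X,m_i)$, and $g(X,X)=2X_1X_2+\sum_i X_i^2$. *)

theory Defs
  imports "HOL-Analysis.Analysis"
begin

text \<open>Smooth (C-infinity) maps on a set: differentiable, and every directional
derivative is again smooth (greatest fixed point).\<close>
coinductive smooth_on :: "'a::real_normed_vector set \<Rightarrow> ('a \<Rightarrow> 'b::real_normed_vector) \<Rightarrow> bool"
  for S where
  smooth_onI: "f differentiable_on S \<Longrightarrow>
     (\<forall>h. smooth_on S (\<lambda>p. frechet_derivative f (at p) h)) \<Longrightarrow> smooth_on S f"

text \<open>Points and tangent vectors are triples (u, v, x) with x in R^(N-2).
The metric g = 2 du (dv + H du + W_e dx^e) + g_ef dx^e dx^f, with H, W, G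
functions of (u, x).\<close>
definition gmet ::
  "(real \<times> (real^'n) \<Rightarrow> real) \<Rightarrow> (real \<times> (real^'n) \<Rightarrow> real^'n) \<Rightarrow> (real \<times> (real^'n) \<Rightarrow> (real^'n^'n))
   \<Rightarrow> real \<times> real \<times> (real^'n) \<Rightarrow> real \<times> real \<times> (real^'n) \<Rightarrow> real \<times> real \<times> (real^'n) \<Rightarrow> real" where
  "gmet H W G p a b =
     (let u = fst p; x = snd (snd p);
          au = fst a; av = fst (snd a); ax = snd (snd a);
          bu = fst b; bv = fst (snd b); bx = snd (snd b)
      in au * bv + av * bu + 2 * H (u, x) * au * bu
         + au * (W (u, x) \<bullet> bx) + bu * (W (u, x) \<bullet> ax)
         + ax \<bullet> (G (u, x) *v bx))"

text \<open>Killing equation (Lie derivative of a metric field g along X vanishes),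
in coordinates on an open subset of a vector space:
(L_X g)_p(a,b) = D_p(g(a,b))(X p) + g_p(DX_p a, b) + g_p(a, DX_p b).\<close>
definition killing_on ::
  "'a::real_normed_vector set \<Rightarrow> ('a \<Rightarrow> 'a \<Rightarrow> 'a \<Rightarrow> real) \<Rightarrow> ('a \<Rightarrow> 'a) \<Rightarrow> bool" where
  "killing_on S g X \<longleftrightarrow>
     (\<forall>p\<in>S. \<forall>a b. frechet_derivative (\<lambda>q. g q a b) (at p) (X p)
        + g p (frechet_derivative X (at p) a) b + g p a (frechet_derivative X (at p) b) = 0)"

text \<open>Frame vectors: ell = d_v, n = d_u - H d_v,
m_i = m_i^e (d_e - W_e d_v) with m_i^e the inverse matrix of m^i_e = M $ i $ e.\<close>
definition ellv :: "real \<times> real \<times> (real^'n)" where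
  "ellv = (0, 1, 0)"

definition nvec :: "(real \<times> (real^'n) \<Rightarrow> real) \<Rightarrow> real \<times> (real^'n) \<Rightarrow> real \<times> real \<times> (real^'n)" where
  "nvec H q = (1, - H q, 0)"

definition mvec :: "(real \<times> (real^'n) \<Rightarrow> real^'n) \<Rightarrow> (real \<times> (real^'n) \<Rightarrow> (real^'n^'n))
     \<Rightarrow> real \<times> (real^'n) \<Rightarrow> 'n \<Rightarrow> real \<times> real \<times> (real^'n)" where
  "mvec W M q i =
     (0, - (\<Sum>e\<in>UNIV. matrix_inv (M q) $ e $ i * W q $ e), (\<chi> e. matrix_inv (M q) $ e $ i))"

end

theory Submission imports Defs begin

lemma gmet_ell_l: "gmet H W G p ellv b = fst b"
  by (simp add: gmet_def ellv_def Let_def)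

lemma gmet_ell_r: "gmet H W G p a ellv = fst a"
  by (simp add: gmet_def ellv_def Let_def)

lemma quad_nonpos:
  fixes a b c :: real
  assumes h: "\<forall>t. a + b*t + c*t^2 \<le> 0" and c: "c \<ge> 0"
  shows "c = 0 \<and> b = 0"
proof -
  have c0: "c = 0"
  proof (rule ccontr)
    assume "c \<noteq> 0" then have cp: "c > 0" using c by simp
    define t where "t = (\<bar>a\<bar> + \<bar>b\<bar> + 1) / c + 1"
    have t1: "t \<ge> 1" using cp by (simp add: t_def)
    have "c * t \<ge> \<bar>a\<bar> + \<bar>b\<bar> + 1" using cp by (simp add: t_def field_simps)
    then have "c * t * t \<ge> (\<bar>a\<bar> + \<bar>b\<bar> + 1) * t" using t1 by (simp add: mult_right_mono)
    moreover have "(\<bar>a\<bar> + \<bar>b\<bar> + 1) * t > - a - b * t"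
    proof -
      have e1: "\<bar>a\<bar> * t \<ge> \<bar>a\<bar>" using t1 by (simp add: mult_le_cancel_left1)
      have "-b \<le> \<bar>b\<bar>" by simp
      then have e2: "(-b) * t \<le> \<bar>b\<bar> * t" by (rule mult_right_mono) (use t1 in auto)
      have e3: "(\<bar>a\<bar> + \<bar>b\<bar> + 1) * t = \<bar>a\<bar> * t + \<bar>b\<bar> * t + t" by (simp add: algebra_simps)
      have "-a \<le> \<bar>a\<bar>" by simp
      then show ?thesis using e1 e2 e3 t1 by simp
    qed
    ultimately have "a + b*t + c*t^2 > 0" by (simp add: power2_eq_square algebra_simps)
    then show False using h by (meson not_le)
  qed
  have "b = 0"
  proof (rule ccontr)
    assume b: "b \<noteq> 0"
    have "a + b*((1 - a)/b) + c*((1-a)/b)^2 \<le> 0" using h by blast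
    then show False using b c0 by simp
  qed
  with c0 show ?thesis by simp
qed

lemma transl_deriv:
  fixes f :: "'a::real_normed_vector \<Rightarrow> 'b::real_normed_vector"
  assumes "open S" "p \<in> S" "\<forall>q\<in>S. f (q + \<tau>) = f q"
    and "(f has_derivative D1) (at p)" "(f has_derivative D2) (at (p + \<tau>))"
  shows "D1 = D2"
proof -
  have "((\<lambda>q. q + \<tau>) has_derivative (\<lambda>h. h)) (at p)"
    by (auto intro!: derivative_eq_intros)
  from has_derivative_compose[OF this assms(5)]
  have "((\<lambda>q. f (q + \<tau>)) has_derivative D2) (at p)" by simp
  then have "(f has_derivative D2) (at p)"
    by (rule has_derivative_transform_within_open[OF _ assms(1,2)]) (use assms(3) in auto)
  then show ?thesis using assms(4) has_derivative_unique by blast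
qed


lemma gmet_Y:
  "fst a = 0 \<Longrightarrow> gmet H W G p a b = fst (snd a) * fst b + fst b * (W (fst p, snd (snd p)) \<bullet> snd (snd a))
     + snd (snd a) \<bullet> (G (fst p, snd (snd p)) *v snd (snd b))"
  by (simp add: gmet_def Let_def)

lemma gmet_quad:
  fixes a bb yv t :: real and cx yx :: "real^'n"
  shows "gmet H W G (u, v, x) (a, bb + t * yv, cx + t *\<^sub>R yx) (a, bb + t * yv, cx + t *\<^sub>R yx)
    = gmet H W G (u, v, x) (a, bb, cx) (a, bb, cx)
      + (2 * a * yv + 2 * a * (W (u, x) \<bullet> yx) + cx \<bullet> (G (u,x) *v yx) + yx \<bullet> (G (u,x) *v cx)) * t
      + (yx \<bullet> (G (u,x) *v yx)) * t^2"
  by (simp add: gmet_def Let_def algebra_simps inner_add_left inner_add_right power2_eq_square)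

lemma gmet_v: "gmet H W G (u, v, x) a b = gmet H W G (u, 0, x) a b"
  by (simp add: gmet_def)

lemma gmet_diag:
  fixes a bb :: real and cx :: "real^'n"
  shows "gmet H W G (u, v, x) (a, bb, cx) (a, bb, cx)
    = 2 * a * (bb + a * H (u, x) + W (u, x) \<bullet> cx) + cx \<bullet> (G (u,x) *v cx)"
  by (simp add: gmet_def Let_def algebra_simps)

lemma inv_matrix:
  fixes M :: "real^'n^'n"
  assumes "invertible M"
  shows "matrix_inv M ** M = mat 1"
proof -
  have "\<exists>A'. M ** A' = mat 1 \<and> A' ** M = mat 1" using assms by (simp add: invertible_def)
  then have "M ** matrix_inv M = mat 1 \<and> matrix_inv M ** M = mat 1"
    unfolding matrix_inv_def by (rule someI_ex)
  then show ?thesis by simp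
qed

lemma mvec_sum:
  fixes M :: "real \<times> (real^'n) \<Rightarrow> real^'n^'n"
  shows "(\<Sum>i\<in>UNIV. F $ i *\<^sub>R mvec W M q i)
     = (0, - (W q \<bullet> (matrix_inv (M q) *v F)), matrix_inv (M q) *v F)"
proof -
  have 1: "fst (\<Sum>i\<in>UNIV. F $ i *\<^sub>R mvec W M q i) = 0"
    by (simp add: fst_sum mvec_def)
  have 2: "fst (snd (\<Sum>i\<in>UNIV. F $ i *\<^sub>R mvec W M q i)) = - (W q \<bullet> (matrix_inv (M q) *v F))"
    apply (simp add: snd_sum fst_sum mvec_def inner_vec_def matrix_vector_mult_def sum_distrib_left
       sum_negf[symmetric])
    apply (subst sum.swap)
    apply (simp add: algebra_simps sum_distrib_left)
    done
  have 3: "snd (snd (\<Sum>i\<in>UNIV. F $ i *\<^sub>R mvec W M q i)) = matrix_inv (M q) *v F"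
    by (simp add: snd_sum mvec_def vec_eq_iff matrix_vector_mult_def algebra_simps)
  show ?thesis using 1 2 3 by (simp add: prod_eq_iff)
qed

theorem mainTheorem4:
  fixes V :: "(real \<times> (real^'n)) set"
    and H :: "real \<times> (real^'n) \<Rightarrow> real"
    and W :: "real \<times> (real^'n) \<Rightarrow> real^'n"
    and G M :: "real \<times> (real^'n) \<Rightarrow> (real^'n^'n)"
    and X :: "real \<times> real \<times> (real^'n) \<Rightarrow> real \<times> real \<times> (real^'n)"
  assumes V_open: "open V" and V_conn: "connected V"
    and H_smooth: "smooth_on V H" and W_smooth: "smooth_on V W" and G_smooth: "smooth_on V G"
    and G_sym: "\<forall>q\<in>V. transpose (G q) = G q"
    and G_pos: "\<forall>q\<in>V. \<forall>y. y \<noteq> 0 \<longrightarrow> y \<bullet> (G q *v y) > 0"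
    and M_frame: "\<forall>q\<in>V. G q = transpose (M q) ** M q"
    and X_smooth: "smooth_on {(u, v, x). (u, x) \<in> V} X"
    and X_killing: "killing_on {(u, v, x). (u, x) \<in> V} (gmet H W G) X"
    and X_causal: "\<forall>p\<in>{(u, v, x). (u, x) \<in> V}. gmet H W G p (X p) (X p) \<le> 0"
  shows "\<exists>c::real. \<exists>F2 :: real \<times> (real^'n) \<Rightarrow> real. \<exists>F :: real \<times> (real^'n) \<Rightarrow> real^'n.
           (\<forall>p\<in>{(u, v, x). (u, x) \<in> V}. gmet H W G p (X p) ellv = c)
         \<and> (\<forall>u v x. (u, x) \<in> V \<longrightarrow>
              X (u, v, x) = c *\<^sub>R nvec H (u, x) + F2 (u, x) *\<^sub>R ellv
                            + (\<Sum>i\<in>UNIV. F (u, x) $ i *\<^sub>R mvec W M (u, x) i))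
         \<and> (\<forall>q\<in>V. 2 * c * F2 q + (\<Sum>i\<in>UNIV. (F q $ i)\<^sup>2) \<le> 0)"
  proof -
  define S :: "(real \<times> real \<times> (real^'n)) set" where "S = {(u, v, x). (u, x) \<in> V}"
  define D where "D p = frechet_derivative X (at p)" for p
  define Y where "Y p = D p ellv" for p
  have S_eq: "p \<in> S \<longleftrightarrow> (fst p, snd (snd p)) \<in> V" for p by (cases p) (auto simp: S_def)
  have S_mem: "(u, t, x) \<in> S \<longleftrightarrow> (u, x) \<in> V" for u t x by (simp add: S_def)
  have S_open: "open S"
  proof -
    have "S = (\<lambda>p. (fst p, snd (snd p))) -` V" using S_eq by auto
    then show ?thesis by (auto intro!: continuous_open_vimage V_open continuous_intros)
  qed
  have Xdiff: "X differentiable_on S"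
    using X_smooth[folded S_def] by (cases rule: smooth_on.cases) auto
  have dX: "(X has_derivative D p) (at p)" if "p \<in> S" for p
  proof -
    have "X differentiable (at p within S)" using Xdiff that by (simp add: differentiable_on_def)
    then have "X differentiable (at p)" using at_within_open[OF that S_open] by simp
    then show ?thesis unfolding D_def by (simp add: frechet_derivative_works)
  qed
  have linD: "linear (D p)" if "p \<in> S" for p using dX[OF that] has_derivative_linear by blast
  have K: "gmet H W G p (Y p) b + fst (D p b) = 0" if "p \<in> S" for p b
  proof -
    from X_killing[folded S_def] that have "frechet_derivative (\<lambda>q. gmet H W G q ellv b) (at p) (X p)
       + gmet H W G p (D p ellv) b + gmet H W G p ellv (D p b) = 0"
      unfolding killing_on_def D_def by blast
    then show ?thesis by (simp add: gmet_ell_l Y_def)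
  qed
  have Yu: "fst (Y p) = 0" if "p \<in> S" for p
    using K[OF that, of ellv] by (simp add: gmet_ell_r Y_def)
  have line: "((\<lambda>s. X (u, s, x)) has_derivative (\<lambda>s. s *\<^sub>R Y (u, t, x))) (at t)"
    if "(u, x) \<in> V" for u t x
  proof -
    have "((\<lambda>s. (u, s, x)) has_derivative (\<lambda>s. s *\<^sub>R ellv)) (at t)"
      by (auto intro!: derivative_eq_intros simp: ellv_def)
    from has_derivative_compose[OF this dX] that
    have "((\<lambda>s. X (u, s, x)) has_derivative (\<lambda>s. D (u, t, x) (s *\<^sub>R ellv))) (at t)"
      by (simp add: S_mem)
    moreover have "D (u, t, x) (s *\<^sub>R ellv) = s *\<^sub>R Y (u, t, x)" for s
      using linD[of "(u,t,x)"] that by (simp add: S_mem Y_def linear_cmul)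
    ultimately show ?thesis by simp
  qed
  have Ainv: "fst (X (u, t, x)) = fst (X (u, t', x))" if "(u, x) \<in> V" for u t t' x
  proof -
    have "((\<lambda>s. fst (X (u, s, x))) has_derivative (\<lambda>h. 0)) (at s within UNIV)" for s
    proof -
      have "((\<lambda>s. fst (X (u, s, x))) has_derivative (\<lambda>h. fst (h *\<^sub>R Y (u, s, x)))) (at s)"
        using has_derivative_fst[OF line[OF that]] .
      moreover have "fst (Y (u, s, x)) = 0" using Yu[of "(u,s,x)"] that by (simp add: S_mem)
      ultimately show ?thesis by simp
    qed
    from has_derivative_zero_unique[OF convex_UNIV this] show ?thesis by blast
  qed
  have DAinv: "fst (D (u, t, x) b) = fst (D (u, t', x) b)" if "(u, x) \<in> V" for u t t' x b
  proof -
    define \<tau> :: "real \<times> real \<times> (real^'n)" where "\<tau> = (0, t' - t, 0)"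
    have "(\<lambda>b. fst (D (u, t, x) b)) = (\<lambda>b. fst (D ((u, t, x) + \<tau>) b))"
    proof (rule transl_deriv[where f = "\<lambda>q. fst (X q)"])
      show "open S" by (rule S_open)
      show "(u, t, x) \<in> S" using that by (simp add: S_mem)
      show "\<forall>q\<in>S. fst (X (q + \<tau>)) = fst (X q)"
        by (auto simp: \<tau>_def S_def intro: Ainv)
      show "((\<lambda>q. fst (X q)) has_derivative (\<lambda>b. fst (D (u, t, x) b))) (at (u, t, x))"
        using has_derivative_fst[OF dX] that by (simp add: S_mem)
      show "((\<lambda>q. fst (X q)) has_derivative (\<lambda>b. fst (D ((u, t, x) + \<tau>) b))) (at ((u, t, x) + \<tau>))"
        using has_derivative_fst[OF dX] that by (simp add: S_mem \<tau>_def)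
    qed
    from fun_cong[OF this, of b] show ?thesis by (simp add: \<tau>_def)
  qed
  have posG: "y = 0" if "q \<in> V" "y \<bullet> (G q *v y) = 0" for q y
  proof (rule ccontr)
    assume "y \<noteq> 0" then have "y \<bullet> (G q *v y) > 0" using G_pos that(1) by blast
    then show False using that(2) by simp
  qed
  have Yinv: "Y (u, t, x) = Y (u, t', x)" if uxV: "(u, x) \<in> V" for u t t' x
  proof -
    let ?Y1 = "Y (u,t,x)" and ?Y2 = "Y (u,t',x)"
    have p1: "(u,t,x) \<in> S" "(u,t',x) \<in> S" using uxV by (simp_all add: S_mem)
    have f1: "fst ?Y1 = 0" "fst ?Y2 = 0" using Yu p1 by auto
    have e: "snd (snd ?Y1) \<bullet> (G (u,x) *v e) = snd (snd ?Y2) \<bullet> (G (u,x) *v e)" for e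
    proof -
      have "gmet H W G (u,t,x) ?Y1 (0,0,e) + fst (D (u,t,x) (0,0,e)) = 0" using K p1 by blast
      moreover have "gmet H W G (u,t',x) ?Y2 (0,0,e) + fst (D (u,t',x) (0,0,e)) = 0" using K p1 by blast
      moreover have "fst (D (u,t,x) (0,0,e)) = fst (D (u,t',x) (0,0,e))" using DAinv uxV by blast
      ultimately show ?thesis using f1 by (simp add: gmet_Y)
    qed
    define d where "d = snd (snd ?Y1) - snd (snd ?Y2)"
    have "d \<bullet> (G (u,x) *v d) = 0" using e[of d] by (simp add: d_def inner_diff_left)
    then have "d = 0" using posG uxV by blast
    then have x: "snd (snd ?Y1) = snd (snd ?Y2)" by (simp add: d_def)
    have "fst (snd ?Y1) = fst (snd ?Y2)"
    proof -
      have "gmet H W G (u,t,x) ?Y1 (1,0,0) + fst (D (u,t,x) (1,0,0)) = 0" using K p1 by blast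
      moreover have "gmet H W G (u,t',x) ?Y2 (1,0,0) + fst (D (u,t',x) (1,0,0)) = 0" using K p1 by blast
      moreover have "fst (D (u,t,x) (1,0,0)) = fst (D (u,t',x) (1,0,0))" using DAinv uxV by blast
      ultimately show ?thesis using f1 x by (simp add: gmet_Y)
    qed
    then show ?thesis using f1 x by (simp add: prod_eq_iff)
  qed
  have aff: "X (u, t, x) = X (u, 0, x) + t *\<^sub>R Y (u, 0, x)" if uxV: "(u, x) \<in> V" for u t x
  proof -
    have "((\<lambda>s. X (u, s, x) - s *\<^sub>R Y (u, 0, x)) has_derivative (\<lambda>h. 0)) (at s within UNIV)" for s
    proof -
      have "((\<lambda>s. s *\<^sub>R Y (u, 0, x)) has_derivative (\<lambda>h. h *\<^sub>R Y (u, 0, x))) (at s)"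
        by (auto intro!: derivative_eq_intros)
      from has_derivative_diff[OF line[OF uxV] this]
      have "((\<lambda>s. X (u, s, x) - s *\<^sub>R Y (u, 0, x)) has_derivative (\<lambda>h. h *\<^sub>R Y (u, s, x) - h *\<^sub>R Y (u, 0, x))) (at s)" .
      moreover have "Y (u,s,x) = Y (u,0,x)" using Yinv uxV by blast
      ultimately show ?thesis by simp
    qed
    from has_derivative_zero_unique[OF convex_UNIV this, of t 0] show ?thesis by (simp add: algebra_simps)
  qed
  have Q: "snd (snd (Y (u,0,x))) = 0 \<and> fst (X (u,0,x)) * fst (snd (Y (u,0,x))) = 0" if uxV: "(u,x)\<in>V" for u x
  proof -
    obtain a bb cx where X0: "X (u,0,x) = (a,bb,cx)" by (cases "X (u,0,x)") auto
    obtain yu yv yx where Y0: "Y (u,0,x) = (yu,yv,yx)" by (cases "Y (u,0,x)") auto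
    have yu: "yu = 0" using Yu[of "(u,0,x)"] uxV Y0 by (simp add: S_mem)
    define \<alpha> where "\<alpha> = gmet H W G (u, 0, x) (a, bb, cx) (a, bb, cx)"
    define \<beta> where "\<beta> = 2 * a * yv + 2 * a * (W (u, x) \<bullet> yx) + cx \<bullet> (G (u,x) *v yx) + yx \<bullet> (G (u,x) *v cx)"
    define \<gamma> where "\<gamma> = yx \<bullet> (G (u,x) *v yx)"
    have "\<forall>t. \<alpha> + \<beta> * t + \<gamma> * t^2 \<le> 0"
    proof
      fix t
      have "gmet H W G (u,t,x) (X (u,t,x)) (X (u,t,x)) \<le> 0" using X_causal uxV by auto
      moreover have "X (u,t,x) = (a, bb + t*yv, cx + t *\<^sub>R yx)" using aff[OF uxV, of t] X0 Y0 yu by simp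
      ultimately show "\<alpha> + \<beta> * t + \<gamma> * t^2 \<le> 0"
        using gmet_quad[of H W G u t x a bb t yv cx yx] gmet_v[of H W G u t x]
        by (simp add: \<alpha>_def \<beta>_def \<gamma>_def)
    qed
    moreover have "\<gamma> \<ge> 0" using G_pos uxV by (cases "yx = 0") (auto simp: \<gamma>_def intro: less_imp_le)
    ultimately have qq: "\<gamma> = 0 \<and> \<beta> = 0" by (rule quad_nonpos)
    then have yx: "yx = 0" using posG uxV by (simp add: \<gamma>_def)
    then have "a * yv = 0" using qq by (simp add: \<beta>_def)
    then show ?thesis using X0 Y0 yx by simp
  qed
  have Yx0: "snd (snd (Y p)) = 0" and AY: "fst (X p) * fst (snd (Y p)) = 0" if "p \<in> S" for p
  proof -
    obtain u t x where p: "p = (u,t,x)" by (cases p) auto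
    have uxV: "(u,x) \<in> V" using that p by (simp add: S_mem)
    show "snd (snd (Y p)) = 0" using Q[OF uxV] Yinv[OF uxV, of t 0] p by simp
    show "fst (X p) * fst (snd (Y p)) = 0" using Q[OF uxV] Yinv[OF uxV, of t 0] Ainv[OF uxV, of t 0] p by simp
  qed
  have DA: "fst (D p b) = - (fst (snd (Y p)) * fst b)" if "p \<in> S" for p b
    using K[OF that, of b] Yu[OF that] Yx0[OF that] by (simp add: gmet_Y)
  have Sconn: "connected S"
  proof -
    have eq: "S = (\<lambda>z. (fst (fst z), snd z, snd (fst z))) ` (V \<times> (UNIV::real set))"
    proof
      show "S \<subseteq> (\<lambda>z. (fst (fst z), snd z, snd (fst z))) ` (V \<times> (UNIV::real set))"
      proof
        fix p assume "p \<in> S"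
        then obtain u t x where p: "p = (u,t,x)" "(u,x) \<in> V" by (auto simp: S_def)
        then show "p \<in> (\<lambda>z. (fst (fst z), snd z, snd (fst z))) ` (V \<times> (UNIV::real set))"
          by (intro image_eqI[of _ _ "((u,x),t)"]) auto
      qed
      show "(\<lambda>z. (fst (fst z), snd z, snd (fst z))) ` (V \<times> (UNIV::real set)) \<subseteq> S"
        by (auto simp: S_def)
    qed
    have conn: "connected (V \<times> (UNIV::real set))" by (rule connected_Times[OF V_conn connected_UNIV])
    have cont: "continuous_on (V \<times> (UNIV::real set)) (\<lambda>z. (fst (fst z), snd z, snd (fst z)))"
      by (intro continuous_intros)
    show ?thesis unfolding eq by (rule connected_continuous_image[OF cont conn])
  qed
  have Asq: "fst (X p) * fst (X p) = fst (X q) * fst (X q)" if "p\<in>S" "q\<in>S" for p q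
  proof (rule has_derivative_zero_unique_connected[OF S_open Sconn _ that])
    fix z assume z: "z \<in> S"
    have "((\<lambda>q. fst (X q) * fst (X q)) has_derivative (\<lambda>b. fst (X z) * fst (D z b) + fst (D z b) * fst (X z))) (at z)"
      using has_derivative_mult[OF has_derivative_fst[OF dX[OF z]] has_derivative_fst[OF dX[OF z]]] .
    moreover have "fst (X z) * fst (D z b) + fst (D z b) * fst (X z) = 0" for b
    proof -
      have "fst (X z) * fst (D z b) = - ((fst (X z) * fst (snd (Y z))) * fst b)" using DA[OF z, of b] by simp
      then show ?thesis using AY[OF z] by (simp add: algebra_simps)
    qed
    ultimately show "((\<lambda>q. fst (X q) * fst (X q)) has_derivative (\<lambda>x. 0)) (at z)" by simp
  qed
  have Acont: "continuous_on S (\<lambda>q. fst (X q))"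
  proof (rule continuous_at_imp_continuous_on, rule ballI)
    fix p assume "p \<in> S"
    then show "isCont (\<lambda>q. fst (X q)) p" using has_derivative_continuous[OF has_derivative_fst[OF dX]] by blast
  qed
  obtain c where Ac: "\<forall>p\<in>S. fst (X p) = c"
  proof (cases "S = {}")
    case True then show ?thesis using that by auto
  next
    case False then obtain p0 where p0: "p0 \<in> S" by auto
    let ?c = "fst (X p0)"
    let ?I = "(\<lambda>q. fst (X q)) ` S"
    have sub: "?I \<subseteq> {?c, - ?c}"
    proof
      fix y assume "y \<in> ?I" then obtain q where q: "q\<in>S" "y = fst (X q)" by auto
      have "y*y = ?c * ?c" using Asq[OF q(1) p0] q by simp
      then show "y \<in> {?c, -?c}" by (simp add: square_eq_iff)
    qed
    have "connected ?I" by (rule connected_continuous_image[OF Acont Sconn])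
    moreover have "finite ?I" using sub finite_subset by blast
    ultimately have "?I = {} \<or> (\<exists>a. ?I = {a})" using connected_finite_iff_sing by blast
    then obtain a where a: "?I = {a}" using p0 by blast
    have "?c \<in> ?I" using p0 by blast
    then have ca: "?c = a" using a by simp
    have "\<forall>p\<in>S. fst (X p) = ?c"
    proof
      fix p assume "p \<in> S" then have "fst (X p) \<in> ?I" by (rule imageI)
      then show "fst (X p) = ?c" using a ca by simp
    qed
    then show ?thesis by (rule that)
  qed
  have Y0: "Y p = 0" if "p\<in>S" for p
  proof -
    have h1: "((\<lambda>q. fst (X q)) has_derivative (\<lambda>b. fst (D p b))) (at p)" using has_derivative_fst[OF dX[OF that]] .
    have "((\<lambda>q. c) has_derivative (\<lambda>h. 0)) (at p)" by simp
    then have h2: "((\<lambda>q. fst (X q)) has_derivative (\<lambda>h. 0)) (at p)"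
      by (rule has_derivative_transform_within_open[OF _ S_open that]) (use Ac in auto)
    have "(\<lambda>b. fst (D p b)) = (\<lambda>h. 0)" using has_derivative_unique[OF h1 h2] .
    from fun_cong[OF this, of "(1,0,0)"] DA[OF that, of "(1,0,0)"] have "fst (snd (Y p)) = 0" by simp
    then show ?thesis using Yu[OF that] Yx0[OF that] by (simp add: prod_eq_iff)
  qed
  have Xinv: "X (u, t, x) = X (u, 0, x)" if "(u,x) \<in> V" for u t x
    using aff[OF that, of t] Y0[of "(u,0,x)"] that by (simp add: S_mem)
  have Minv: "matrix_inv (M q) ** M q = mat 1" if "q \<in> V" for q
  proof -
    have "\<forall>y. M q *v y = 0 \<longrightarrow> y = 0"
    proof (intro allI impI)
      fix y assume My: "M q *v y = 0"
      have "G q *v y = transpose (M q) *v (M q *v y)" using M_frame that by (simp add: matrix_vector_mul_assoc)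
      then have "y \<bullet> (G q *v y) = 0" using My by simp
      then show "y = 0" using posG that by blast
    qed
    then have "invertible (M q)" using matrix_left_invertible_ker invertible_left_inverse by blast
    then show ?thesis by (rule inv_matrix)
  qed
  have FF: "(M q *v z) \<bullet> (M q *v z) = z \<bullet> (G q *v z)" if "q \<in> V" for q z
  proof -
    have "z \<bullet> (G q *v z) = z \<bullet> (transpose (M q) *v (M q *v z))" using M_frame that by (simp add: matrix_vector_mul_assoc)
    also have "\<dots> = (M q *v z) \<bullet> (M q *v z)" using dot_lmul_matrix[of "M q *v z" "M q" z] by (simp add: inner_commute)
    finally show ?thesis by simp
  qed
  define C0 where "C0 q = snd (snd (X (fst q, 0, snd q)))" for q
  define B0 where "B0 q = fst (snd (X (fst q, 0, snd q)))" for q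
  show ?thesis
  proof (intro exI conjI)
    show "\<forall>p\<in>{(u, v, x). (u, x) \<in> V}. gmet H W G p (X p) ellv = c"
      using Ac unfolding S_def by (simp add: gmet_ell_r)
    show "\<forall>u v x. (u, x) \<in> V \<longrightarrow>
              X (u, v, x) = c *\<^sub>R nvec H (u, x) + (B0 (u,x) + c * H (u,x) + W (u,x) \<bullet> C0 (u,x)) *\<^sub>R ellv
                            + (\<Sum>i\<in>UNIV. (\<lambda>q. M q *v C0 q) (u, x) $ i *\<^sub>R mvec W M (u, x) i)"
    proof (intro allI impI)
      fix u v x assume uxV: "(u, x) \<in> V"
      have A: "fst (X (u, 0, x)) = c" using Ac uxV by (simp add: S_mem)
      have X0: "X (u, v, x) = (c, B0 (u,x), C0 (u,x))" using Xinv[OF uxV, of v] A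
        by (simp add: B0_def C0_def prod_eq_iff)
      show "X (u, v, x) = c *\<^sub>R nvec H (u, x) + (B0 (u,x) + c * H (u,x) + W (u,x) \<bullet> C0 (u,x)) *\<^sub>R ellv
                            + (\<Sum>i\<in>UNIV. (\<lambda>q. M q *v C0 q) (u, x) $ i *\<^sub>R mvec W M (u, x) i)"
        using X0 Minv[OF uxV] by (simp add: mvec_sum nvec_def ellv_def matrix_vector_mul_assoc)
    qed
    show "\<forall>q\<in>V. 2 * c * (B0 q + c * H q + W q \<bullet> C0 q) + (\<Sum>i\<in>UNIV. ((M q *v C0 q) $ i)\<^sup>2) \<le> 0"
    proof
      fix q assume qV: "q \<in> V"
      obtain u x where q: "q = (u, x)" by (cases q) auto
      have uxV: "(u,x) \<in> V" using qV q by simp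
      have A: "fst (X (u, 0, x)) = c" using Ac uxV by (simp add: S_mem)
      have X0: "X (u, 0, x) = (c, B0 (u,x), C0 (u,x))" using A by (simp add: B0_def C0_def prod_eq_iff)
      have "gmet H W G (u,0,x) (X (u,0,x)) (X (u,0,x)) \<le> 0" using X_causal uxV by auto
      moreover have "(\<Sum>i\<in>UNIV. ((M q *v C0 q) $ i)\<^sup>2) = C0 q \<bullet> (G q *v C0 q)"
        using FF[OF qV, of "C0 q"] by (simp add: inner_vec_def power2_eq_square)
      ultimately show "2 * c * (B0 q + c * H q + W q \<bullet> C0 q) + (\<Sum>i\<in>UNIV. ((M q *v C0 q) $ i)\<^sup>2) \<le> 0"
        using X0 q by (simp add: gmet_diag algebra_simps)
    qed
  qed
qed

end
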